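(* Let $P$ be a finite lattice, let $\mu:2^P\to\mathbb{R}_{\ge0}$ be additive, and let $r(f)=\mu(P\setminus\Phi f)$ for $f\in\mathcal{L}_P$. For $f\in\mathcal{L}_P$ define $\mathrm{resilience}(f)=\min\{r(s): s\in\mathcal{L}_P,\ f+s=1\}$ and $\mathrm{fragility}(f)=\max\{r(w): w\in\mathcal{L}_P,\ w\le f,\ w\text{ prime}\}$. Then $\mathrm{fragility}(f)+\mathrm{resilience}(f)=r(1)$.
   Context: $P$ is a finite lattice with greatest element $\hat p$. $\mathcal{L}_P$ is the set of maps $f:P\to P$ satisfying (A.1) $a\le f(a)$; (A.2) $a\le b\Rightarrow f(a)\le f(b)$; (A.3) $f(f(a))=f(a)$, ordered pointwise; it is a lattice with join $+$ and greatest element $1:a\mapsto\hat p$. $\Phi f=\{a:f(a)=a\}$. $f$ is prime if $P\setminus\Phi f$ is closed under $\wedge$. *)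

theory Defs
  imports Complex_Main
begin

definition closure_op :: "('a::{finite,bounded_lattice} \<Rightarrow> 'a) \<Rightarrow> bool" where
  "closure_op f \<longleftrightarrow> (\<forall>a. a \<le> f a) \<and> (\<forall>a b. a \<le> b \<longrightarrow> f a \<le> f b) \<and> (\<forall>a. f (f a) = f a)"

definition Fix :: "('a \<Rightarrow> 'a) \<Rightarrow> 'a set" where
  "Fix f = {a. f a = a}"

definition one_cl :: "'a::{finite,bounded_lattice} \<Rightarrow> 'a" where
  "one_cl = (\<lambda>a. top)"

definition cl_join :: "('a::{finite,bounded_lattice} \<Rightarrow> 'a) \<Rightarrow> ('a \<Rightarrow> 'a) \<Rightarrow> ('a \<Rightarrow> 'a)" where
  "cl_join f g = (THE j. closure_op j \<and> f \<le> j \<and> g \<le> j \<and>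
                      (\<forall>k. closure_op k \<and> f \<le> k \<and> g \<le> k \<longrightarrow> j \<le> k))"

definition prime_cl :: "('a::{finite,bounded_lattice} \<Rightarrow> 'a) \<Rightarrow> bool" where
  "prime_cl f \<longleftrightarrow> (\<forall>a b. a \<notin> Fix f \<longrightarrow> b \<notin> Fix f \<longrightarrow> inf a b \<notin> Fix f)"

definition additive_measure :: "('a set \<Rightarrow> real) \<Rightarrow> bool" where
  "additive_measure \<mu> \<longleftrightarrow> (\<forall>A. \<mu> A \<ge> 0) \<and>
     (\<forall>A B. A \<inter> B = {} \<longrightarrow> \<mu> (A \<union> B) = \<mu> A + \<mu> B)"

definition rk :: "('a set \<Rightarrow> real) \<Rightarrow> ('a \<Rightarrow> 'a) \<Rightarrow> real" where
  "rk \<mu> f = \<mu> (UNIV - Fix f)"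

definition resilience :: "('a set \<Rightarrow> real) \<Rightarrow> ('a::{finite,bounded_lattice} \<Rightarrow> 'a) \<Rightarrow> real" where
  "resilience \<mu> f = Min (rk \<mu> ` {s. closure_op s \<and> cl_join f s = one_cl})"

definition fragility :: "('a set \<Rightarrow> real) \<Rightarrow> ('a::{finite,bounded_lattice} \<Rightarrow> 'a) \<Rightarrow> real" where
  "fragility \<mu> f = Max (rk \<mu> ` {w. closure_op w \<and> w \<le> f \<and> prime_cl w})"

end

theory Submission
  imports Defs
begin

definition moore :: "'a::{finite,bounded_lattice} set \<Rightarrow> bool" where
  "moore M \<longleftrightarrow> top \<in> M \<and> (\<forall>a\<in>M. \<forall>b\<in>M. inf a b \<in> M)"

definition cl :: "'a::{finite,bounded_lattice} set \<Rightarrow> 'a \<Rightarrow> 'a" where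
  "cl M a = Inf_fin {b \<in> M. a \<le> b}"

lemma moore_Inf_fin:
  fixes M :: "'a::{finite,bounded_lattice} set"
  assumes "moore M" "finite A" "A \<noteq> {}" "A \<subseteq> M"
  shows "Inf_fin A \<in> M"
  using assms(2,3,4)
proof (induction A rule: finite_ne_induct)
  case (singleton x) then show ?case by simp
next
  case (insert x F)
  then show ?case using assms(1) by (simp add: Inf_fin.insert moore_def)
qed

lemma cl_props:
  fixes M :: "'a::{finite,bounded_lattice} set"
  assumes "moore M"
  shows "a \<le> cl M a" "cl M a \<in> M" "\<And>b. b \<in> M \<Longrightarrow> a \<le> b \<Longrightarrow> cl M a \<le> b"
proof -
  have ne: "{b \<in> M. a \<le> b} \<noteq> {}" using assms by (auto simp: moore_def)
  show "a \<le> cl M a" unfolding cl_def by (rule Inf_fin.boundedI) (use ne in auto)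
  show "cl M a \<in> M" unfolding cl_def by (rule moore_Inf_fin[OF assms]) (use ne in auto)
  show "\<And>b. b \<in> M \<Longrightarrow> a \<le> b \<Longrightarrow> cl M a \<le> b" unfolding cl_def
    by (rule Inf_fin.coboundedI) auto
qed

lemma cl_closure:
  fixes M :: "'a::{finite,bounded_lattice} set"
  assumes "moore M"
  shows "closure_op (cl M)" "Fix (cl M) = M"
proof -
  note c = cl_props[OF assms]
  show "closure_op (cl M)" unfolding closure_op_def
  proof (intro conjI allI impI)
    fix a b :: 'a assume "a \<le> b"
    then show "cl M a \<le> cl M b" by (meson c order_trans)
  next
    fix a show "a \<le> cl M a" by (rule c(1))
  next
    fix a show "cl M (cl M a) = cl M a"
      using c(1)[of "cl M a"] c(2)[of a] c(3)[of "cl M a" "cl M a"] by (simp add: antisym)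
  qed
  show "Fix (cl M) = M" unfolding Fix_def
  proof (auto)
    fix a assume "cl M a = a" then show "a \<in> M" using c(2)[of a] by simp
  next
    fix a assume "a \<in> M" then show "cl M a = a" using c(1)[of a] c(3)[of a a] by (simp add: antisym)
  qed
qed

lemma closure_moore:
  fixes f :: "'a::{finite,bounded_lattice} \<Rightarrow> 'a"
  assumes "closure_op f"
  shows "moore (Fix f)" "f = cl (Fix f)"
proof -
  have ext1: "\<And>a. a \<le> f a" and mono: "\<And>a b. a \<le> b \<Longrightarrow> f a \<le> f b" and idem: "\<And>a. f (f a) = f a"
    using assms unfolding closure_op_def by auto
  show m: "moore (Fix f)" unfolding moore_def Fix_def
  proof (intro conjI ballI)
    show "top \<in> {a. f a = a}" using ext1[of top] by (simp add: top_le)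
  next
    fix a b assume "a \<in> {a. f a = a}" "b \<in> {a. f a = a}"
    then have "f a = a" "f b = b" by auto
    then have "f (inf a b) \<le> inf a b" using mono[of "inf a b" a] mono[of "inf a b" b] by simp
    then show "inf a b \<in> {a. f a = a}" using ext1[of "inf a b"] by (simp add: antisym)
  qed
  note c = cl_props[OF m]
  show "f = cl (Fix f)"
  proof
    fix a
    have "f a \<in> Fix f" using idem by (simp add: Fix_def)
    then have 1: "cl (Fix f) a \<le> f a" using c(3) ext1 by blast
    have "f a \<le> f (cl (Fix f) a)" using mono c(1) by blast
    also have "\<dots> = cl (Fix f) a" using c(2)[of a] by (simp add: Fix_def)
    finally show "f a = cl (Fix f) a" using 1 by (simp add: antisym)
  qed
qed

lemma le_iff_Fix:
  fixes f w :: "'a::{finite,bounded_lattice} \<Rightarrow> 'a"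
  assumes "closure_op f" "closure_op w"
  shows "w \<le> f \<longleftrightarrow> Fix f \<subseteq> Fix w"
proof
  assume "w \<le> f"
  then show "Fix f \<subseteq> Fix w" using assms(2) unfolding Fix_def closure_op_def le_fun_def
    by (auto intro: antisym) (metis antisym)
next
  assume h: "Fix f \<subseteq> Fix w"
  show "w \<le> f"
  proof (rule le_funI)
    fix a
    have "f a \<in> Fix f" using assms(1) by (simp add: Fix_def closure_op_def)
    then have "w (f a) = f a" using h by (auto simp: Fix_def)
    moreover have "w a \<le> w (f a)" using assms unfolding closure_op_def by blast
    ultimately show "w a \<le> f a" by simp
  qed
qed

lemma cl_join_eq:
  fixes f s :: "'a::{finite,bounded_lattice} \<Rightarrow> 'a"
  assumes "closure_op f" "closure_op s"
  shows "cl_join f s = cl (Fix f \<inter> Fix s)"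
proof -
  have mf: "moore (Fix f)" and ms: "moore (Fix s)" using closure_moore assms by blast+
  have m: "moore (Fix f \<inter> Fix s)" using mf ms unfolding moore_def by auto
  define J where "J = cl (Fix f \<inter> Fix s)"
  note c = cl_props[OF m]
  have cJ: "closure_op J" using cl_closure[OF m] J_def by simp
  have fJ: "f \<le> J"
  proof (rule le_funI)
    fix a
    have "f a \<le> f (J a)" using assms(1) c(1) J_def unfolding closure_op_def by blast
    also have "\<dots> = J a" using c(2)[of a] J_def by (simp add: Fix_def)
    finally show "f a \<le> J a" .
  qed
  have sJ: "s \<le> J"
  proof (rule le_funI)
    fix a
    have "s a \<le> s (J a)" using assms(2) c(1) J_def unfolding closure_op_def by blast
    also have "\<dots> = J a" using c(2)[of a] J_def by (simp add: Fix_def)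
    finally show "s a \<le> J a" .
  qed
  have least: "J \<le> k" if "closure_op k" "f \<le> k" "s \<le> k" for k
  proof (rule le_funI)
    fix a
    have "Fix k \<subseteq> Fix f" "Fix k \<subseteq> Fix s" using le_iff_Fix that assms by blast+
    moreover have "k a \<in> Fix k" using that(1) by (simp add: Fix_def closure_op_def)
    ultimately have "k a \<in> Fix f \<inter> Fix s" by blast
    moreover have "a \<le> k a" using that(1) by (simp add: closure_op_def)
    ultimately show "J a \<le> k a" using c(3) J_def by blast
  qed
  have "cl_join f s = J" unfolding cl_join_def
  proof (rule the_equality)
    show "closure_op J \<and> f \<le> J \<and> s \<le> J \<and> (\<forall>k. closure_op k \<and> f \<le> k \<and> s \<le> k \<longrightarrow> J \<le> k)"
      using cJ fJ sJ least by blast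
  next
    fix j assume "closure_op j \<and> f \<le> j \<and> s \<le> j \<and> (\<forall>k. closure_op k \<and> f \<le> k \<and> s \<le> k \<longrightarrow> j \<le> k)"
    then show "j = J" using cJ fJ sJ least by (meson antisym)
  qed
  then show ?thesis using J_def by simp
qed

lemma Fix_one: "Fix (one_cl :: 'a::{finite,bounded_lattice} \<Rightarrow> 'a) = {top}"
  by (auto simp: Fix_def one_cl_def)

lemma join_one_iff:
  fixes f s :: "'a::{finite,bounded_lattice} \<Rightarrow> 'a"
  assumes "closure_op f" "closure_op s"
  shows "cl_join f s = one_cl \<longleftrightarrow> Fix f \<inter> Fix s = {top}"
proof -
  have m: "moore (Fix f \<inter> Fix s)" using closure_moore assms unfolding moore_def by blast
  note e = cl_join_eq[OF assms]
  show ?thesis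
  proof
    assume "cl_join f s = one_cl"
    then show "Fix f \<inter> Fix s = {top}" using cl_closure(2)[OF m] e Fix_one by metis
  next
    assume h: "Fix f \<inter> Fix s = {top}"
    show "cl_join f s = one_cl"
    proof
      fix a show "cl_join f s a = one_cl a"
        using cl_props(2)[OF m, of a] h e by (simp add: one_cl_def)
    qed
  qed
qed

lemma additive_props:
  assumes "additive_measure \<mu>"
  shows "\<mu> {} = 0" "\<And>A B. A \<subseteq> B \<Longrightarrow> \<mu> A \<le> \<mu> B"
    "\<And>A B. A \<inter> B = {} \<Longrightarrow> \<mu> (A \<union> B) = \<mu> A + \<mu> B"
proof -
  show "\<mu> {} = 0" using assms unfolding additive_measure_def
    by (metis Int_empty_left Un_empty add_cancel_right_right)
  show "\<And>A B. A \<inter> B = {} \<Longrightarrow> \<mu> (A \<union> B) = \<mu> A + \<mu> B" using assms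
    unfolding additive_measure_def by blast
  fix A B :: "'a set" assume "A \<subseteq> B"
  then have "B = A \<union> (B - A)" "A \<inter> (B - A) = {}" by auto
  then show "\<mu> A \<le> \<mu> B" using assms unfolding additive_measure_def by (metis le_add_same_cancel1)
qed

lemma dir_a:
  fixes \<mu> :: "'a::{finite,bounded_lattice} set \<Rightarrow> real" and f w :: "'a \<Rightarrow> 'a"
  assumes mu: "additive_measure \<mu>" and cf: "closure_op f" and cw: "closure_op w"
    and wf: "w \<le> f" and pw: "prime_cl w"
  shows "\<exists>s. closure_op s \<and> cl_join f s = one_cl \<and> rk \<mu> w + rk \<mu> s = rk \<mu> one_cl"
proof -
  define C where "C = UNIV - Fix w"
  have FW: "Fix f \<subseteq> Fix w" using le_iff_Fix cf cw wf by blast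
  have mw: "moore (Fix w)" using closure_moore cw by blast
  have topw: "top \<in> Fix w" using mw moore_def by blast
  have topf: "top \<in> Fix f" using closure_moore(1)[OF cf] moore_def by blast
  have Cinf: "\<And>a b. a \<in> C \<Longrightarrow> b \<in> C \<Longrightarrow> inf a b \<in> C" using pw unfolding prime_cl_def C_def by blast
  define S where "S = insert top C"
  have mS: "moore S" unfolding moore_def S_def using Cinf by auto
  define s where "s = cl S"
  have cs: "closure_op s" and Fs: "Fix s = S" using cl_closure[OF mS] s_def by auto
  have "Fix f \<inter> Fix s = {top}" using Fs S_def C_def FW topf by auto
  then have j: "cl_join f s = one_cl" using join_one_iff cf cs by blast
  have "rk \<mu> w + rk \<mu> s = \<mu> C + \<mu> (UNIV - S)" by (simp add: rk_def Fs C_def)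
  also have "\<dots> = \<mu> (C \<union> (UNIV - S))" 
  proof -
    have "C \<inter> (UNIV - S) = {}" using S_def by auto
    then show ?thesis using additive_props(3)[OF mu] by metis
  qed
  also have "C \<union> (UNIV - S) = UNIV - {top}" using S_def C_def topw by auto
  finally have "rk \<mu> w + rk \<mu> s = rk \<mu> one_cl" by (simp add: rk_def Fix_one)
  then show ?thesis using cs j by blast
qed

lemma maximal_compl:
  fixes F S :: "'a::{finite,bounded_lattice} set"
  assumes mF: "moore F" and mS: "moore S" and SF: "S \<inter> F = {top}"
    and max: "\<And>T. moore T \<Longrightarrow> T \<inter> F = {top} \<Longrightarrow> S \<subseteq> T \<Longrightarrow> T = S"
    and x: "x \<notin> S - {top}" and y: "y \<notin> S - {top}"
  shows "inf x y \<notin> S - {top}"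
proof
  assume z: "inf x y \<in> S - {top}"
  have xt: "x \<noteq> top" using z y by auto
  have yt: "y \<noteq> top" using z x by auto
  have ext: "\<exists>t\<in>S. inf u t \<in> F \<and> inf u t \<noteq> top" if u: "u \<notin> S" for u
  proof (rule ccontr)
    assume nex: "\<not> ?thesis"
    define T where "T = S \<union> (\<lambda>t. inf u t) ` S"
    have "moore T" unfolding moore_def T_def
    proof (intro conjI ballI)
      show "top \<in> S \<union> (\<lambda>t. inf u t) ` S" using mS moore_def by blast
    next
      fix a b assume a: "a \<in> S \<union> (\<lambda>t. inf u t) ` S" and b: "b \<in> S \<union> (\<lambda>t. inf u t) ` S"
      have cl: "\<And>p q. p \<in> S \<Longrightarrow> q \<in> S \<Longrightarrow> inf p q \<in> S" using mS moore_def by blast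
      show "inf a b \<in> S \<union> (\<lambda>t. inf u t) ` S"
      proof (cases "a \<in> S")
        case True
        then show ?thesis
        proof (cases "b \<in> S")
          case True then show ?thesis using cl \<open>a \<in> S\<close> by blast
        next
          case False
          then obtain q where "q \<in> S" "b = inf u q" using b by blast
          then have "inf a b = inf u (inf a q)" by (simp add: inf_aci)
          then show ?thesis using cl \<open>q \<in> S\<close> \<open>a \<in> S\<close> by blast
        qed
      next
        case False
        then obtain p where p: "p \<in> S" "a = inf u p" using a by blast
        show ?thesis
        proof (cases "b \<in> S")
          case True
          then have "inf a b = inf u (inf p b)" using p by (simp add: inf_aci)
          then show ?thesis using cl True p by blast
        next
          case False
          then obtain q where "q \<in> S" "b = inf u q" using b by blast
          then have "inf a b = inf u (inf p q)" using p by (simp add: inf_aci)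
          then show ?thesis using cl \<open>q \<in> S\<close> p by blast
        qed
      qed
    qed
    moreover have "T \<inter> F = {top}" using SF nex mF unfolding T_def moore_def by auto
    moreover have "S \<subseteq> T" unfolding T_def by auto
    ultimately have "T = S" using max by blast
    moreover have "u \<in> T" unfolding T_def using mS moore_def by (metis UnI2 image_eqI inf_top.right_neutral)
    ultimately show False using u by simp
  qed
  obtain t where t: "t \<in> S" "inf x t \<in> F" using ext[of x] x xt by auto
  obtain u where u: "u \<in> S" "inf y u \<in> F" using ext[of y] y yt by auto
  have clF: "\<And>p q. p \<in> F \<Longrightarrow> q \<in> F \<Longrightarrow> inf p q \<in> F" using mF unfolding moore_def by blast
  have clS: "\<And>p q. p \<in> S \<Longrightarrow> q \<in> S \<Longrightarrow> inf p q \<in> S" using mS unfolding moore_def by blast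
  have A: "inf (inf x t) (inf y u) \<in> F" using clF t u by blast
  have B: "inf (inf x t) (inf y u) = inf (inf (inf x y) t) u" by (simp add: inf_aci)
  have zS: "inf x y \<in> S" using z by blast
  have C: "inf (inf (inf x y) t) u \<in> S" using clS[OF clS[OF zS t(1)] u(1)] .
  have "inf (inf (inf x y) t) u \<in> S \<inter> F" using A B C by simp
  then have "inf (inf (inf x y) t) u = top" using SF by blast
  then have "inf x y = top" by (metis inf_le1 top_unique)
  then show False using z by simp
qed

lemma dir_b:
  fixes \<mu> :: "'a::{finite,bounded_lattice} set \<Rightarrow> real" and f s :: "'a \<Rightarrow> 'a"
  assumes mu: "additive_measure \<mu>" and cf: "closure_op f" and cs: "closure_op s"
    and j: "cl_join f s = one_cl"
  shows "\<exists>w. closure_op w \<and> w \<le> f \<and> prime_cl w \<and> rk \<mu> one_cl \<le> rk \<mu> w + rk \<mu> s"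
proof -
  define F where "F = Fix f"
  have mF: "moore F" using closure_moore cf F_def by blast
  define Q where "Q = {T. moore T \<and> T \<inter> F = {top}}"
  have s0: "Fix s \<in> Q" using join_one_iff cf cs j closure_moore(1)[OF cs] Q_def F_def by auto
  have fQ: "finite Q" by (rule finite_subset[of _ UNIV]) simp_all
  obtain S where S: "S \<in> Q" "Fix s \<subseteq> S" and mx0: "\<forall>T\<in>Q. S \<le> T \<longrightarrow> S = T"
    using finite_has_maximal2[OF fQ s0] by (elim bexE conjE) (rule that)
  have mx: "\<And>T. T \<in> Q \<Longrightarrow> S \<subseteq> T \<Longrightarrow> S = T" using mx0 by blast
  have mS: "moore S" and SF: "S \<inter> F = {top}" using S Q_def by auto
  have clS: "\<And>p q. p \<in> S \<Longrightarrow> q \<in> S \<Longrightarrow> inf p q \<in> S" and topS: "top \<in> S"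
    using mS unfolding moore_def by blast+
  define W where "W = UNIV - (S - {top})"
  have mW: "moore W" unfolding moore_def
  proof (intro conjI ballI)
    show "top \<in> W" unfolding W_def by simp
    fix a b assume "a \<in> W" "b \<in> W"
    then show "inf a b \<in> W"
    proof -
      have "\<And>T. moore T \<Longrightarrow> T \<inter> F = {top} \<Longrightarrow> S \<subseteq> T \<Longrightarrow> T = S" using mx Q_def by blast
      from maximal_compl[OF mF mS SF this] \<open>a \<in> W\<close> \<open>b \<in> W\<close> show ?thesis unfolding W_def by blast
    qed
  qed
  define w where "w = cl W"
  have cw: "closure_op w" and Fw: "Fix w = W" using cl_closure[OF mW] w_def by auto
  have "F \<subseteq> W" using SF W_def by auto
  then have wf: "w \<le> f" using le_iff_Fix cf cw Fw F_def by blast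
  have pw: "prime_cl w" unfolding prime_cl_def Fw W_def
  proof (intro allI impI)
    fix a b assume a: "a \<notin> UNIV - (S - {top})" and b: "b \<notin> UNIV - (S - {top})"
    then have "inf a b \<in> S" using clS by blast
    moreover have "inf a b \<noteq> top"
    proof
      assume "inf a b = top"
      then have "a = top" by (metis inf_le1 top_unique)
      then show False using a by blast
    qed
    ultimately show "inf a b \<notin> UNIV - (S - {top})" by auto
  qed
  have "rk \<mu> one_cl = \<mu> ((S - {top}) \<union> (UNIV - S))" 
  proof -
    from topS have "(S - {top}) \<union> (UNIV - S) = UNIV - {top}" by auto
    then show ?thesis by (simp add: rk_def Fix_one)
  qed
  also have "\<dots> = \<mu> (S - {top}) + \<mu> (UNIV - S)"
  proof -
    have "(S - {top}) \<inter> (UNIV - S) = {}" by blast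
    then show ?thesis using additive_props(3)[OF mu] by metis
  qed
  also have "\<mu> (UNIV - S) \<le> \<mu> (UNIV - Fix s)"
  proof -
    have "UNIV - S \<subseteq> UNIV - Fix s" using S(2) by blast
    then show ?thesis using additive_props(2)[OF mu] by metis
  qed
  also have "\<mu> (S - {top}) = rk \<mu> w"
  proof -
    have "UNIV - W = S - {top}" unfolding W_def by blast
    then show ?thesis by (simp add: rk_def Fw)
  qed
  finally have "rk \<mu> one_cl \<le> rk \<mu> w + rk \<mu> s" by (simp add: rk_def)
  then show ?thesis using cw wf pw by blast
qed

theorem mainTheorem17:
  fixes \<mu> :: "'a::{finite,bounded_lattice} set \<Rightarrow> real" and f :: "'a \<Rightarrow> 'a"
  assumes "additive_measure \<mu>" and "closure_op f"
  shows "fragility \<mu> f + resilience \<mu> f = rk \<mu> one_cl"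
proof -
  define Wf where "Wf = {w. closure_op w \<and> w \<le> f \<and> prime_cl w}"
  define R where "R = {s. closure_op s \<and> cl_join f s = one_cl}"
  have "id \<in> Wf" unfolding Wf_def
    using assms(2) by (auto simp: closure_op_def prime_cl_def Fix_def le_fun_def)
  then have Wne: "rk \<mu> ` Wf \<noteq> {}" by blast
  have c1: "closure_op (one_cl :: 'a \<Rightarrow> 'a)" by (simp add: closure_op_def one_cl_def)
  have "top \<in> Fix f" using closure_moore(1)[OF assms(2)] moore_def by blast
  then have "one_cl \<in> R" unfolding R_def using join_one_iff[OF assms(2) c1] Fix_one c1 by auto
  then have Rne: "rk \<mu> ` R \<noteq> {}" by blast
  have fin1: "finite (rk \<mu> ` Wf)" "finite (rk \<mu> ` R)" by simp_all
  obtain w0 where w0: "w0 \<in> Wf" "Max (rk \<mu> ` Wf) = rk \<mu> w0" using Max_in[OF fin1(1) Wne] by auto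
  obtain s0 where s0: "s0 \<in> R" "Min (rk \<mu> ` R) = rk \<mu> s0" using Min_in[OF fin1(2) Rne] by auto
  obtain s where s: "closure_op s" "cl_join f s = one_cl" "rk \<mu> w0 + rk \<mu> s = rk \<mu> one_cl"
    using dir_a[OF assms(1,2)] w0(1) Wf_def by blast
  have FR: "fragility \<mu> f = Max (rk \<mu> ` Wf)" "resilience \<mu> f = Min (rk \<mu> ` R)"
    unfolding fragility_def resilience_def Wf_def R_def by simp_all
  have "Min (rk \<mu> ` R) \<le> rk \<mu> s" using fin1(2) s R_def by (intro Min_le) auto
  then have le: "fragility \<mu> f + resilience \<mu> f \<le> rk \<mu> one_cl"
    using FR w0 s by linarith
  obtain w where w: "closure_op w" "w \<le> f" "prime_cl w" "rk \<mu> one_cl \<le> rk \<mu> w + rk \<mu> s0"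
    using dir_b[OF assms(1,2)] s0(1) R_def by blast
  have "rk \<mu> w \<le> Max (rk \<mu> ` Wf)" using fin1(1) w Wf_def by (intro Max_ge) auto
  then have ge: "rk \<mu> one_cl \<le> fragility \<mu> f + resilience \<mu> f"
    using FR w s0 by linarith
  show ?thesis using le ge by simp
qed

end
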